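(* Let $\Sigma$ be a finite alphabet with at least two symbols. Define $\delta:\Sigma^{\mathbb{N}}\times\Sigma^{\mathbb{N}}\to\mathbb{R}$ by $\delta(x,x)=0$ and, for $x\neq y$, $\delta(x,y)=2^{-n}$ where $n$ is the minimal number of states of a Büchi automaton that separates $x$ and $y$. Then: (1) $\delta$ is a distance on $\Sigma^{\mathbb{N}}$; (2) $\delta$ is compatible with the Büchi topology $\tau_B$; (3) $\delta$ is not complete.
   Context: A Büchi automaton is $\mathcal{A}=(\Sigma,Q,Q_i,Q_f,\delta)$ with finite state set $Q$, initial states $Q_i$, final states $Q_f$, transitions $\subseteq Q\times\Sigma\times Q$; a run on $\sigma\in\Sigma^{\mathbb{N}}$ is $(q_n)_n$ with $q_0\in Q_i$ and each $(q_n,\sigma(n),q_{n+1})$ a transition; it is accepting if it visits $Q_f$ infinitely often; $L(\mathcal{A})$ is the set of words with an accepting run; $|\mathcal{A}|=|Q|$. A language is $\omega$-regular if it equals some $L(\mathcal{A})$. $\mathcal{A}$ separates $x$ and $y$ if exactly one of $x,y$ lies in $L(\mathcal{A})$. $\tau_B$ is the topology on $\Sigma^{\mathbb{N}}$ generated by the $\omega$-regular languages. *)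

theory Defs
  imports "HOL-Analysis.Analysis"
begin

record 'a buchi =
  states :: "nat set"
  initial :: "nat set"
  final :: "nat set"
  trans :: "(nat \<times> 'a \<times> nat) set"

definition wf_buchi :: "'a buchi \<Rightarrow> bool" where
  "wf_buchi A \<longleftrightarrow> finite (states A) \<and> initial A \<subseteq> states A \<and> final A \<subseteq> states A
     \<and> trans A \<subseteq> states A \<times> UNIV \<times> states A"

definition run :: "'a buchi \<Rightarrow> (nat \<Rightarrow> 'a) \<Rightarrow> (nat \<Rightarrow> nat) \<Rightarrow> bool" where
  "run A \<sigma> r \<longleftrightarrow> r 0 \<in> initial A \<and> (\<forall>n. (r n, \<sigma> n, r (Suc n)) \<in> trans A)"

definition accepting :: "'a buchi \<Rightarrow> (nat \<Rightarrow> nat) \<Rightarrow> bool" where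
  "accepting A r \<longleftrightarrow> infinite {n. r n \<in> final A}"

definition lang :: "'a buchi \<Rightarrow> (nat \<Rightarrow> 'a) set" where
  "lang A = {\<sigma>. \<exists>r. run A \<sigma> r \<and> accepting A r}"

definition size_buchi :: "'a buchi \<Rightarrow> nat" where
  "size_buchi A = card (states A)"

definition omega_regular :: "(nat \<Rightarrow> 'a) set \<Rightarrow> bool" where
  "omega_regular L \<longleftrightarrow> (\<exists>A. wf_buchi A \<and> lang A = L)"

definition separates :: "'a buchi \<Rightarrow> (nat \<Rightarrow> 'a) \<Rightarrow> (nat \<Rightarrow> 'a) \<Rightarrow> bool" where
  "separates A x y \<longleftrightarrow> (x \<in> lang A \<longleftrightarrow> y \<notin> lang A)"

definition buchi_topology :: "(nat \<Rightarrow> 'a) topology" where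
  "buchi_topology = topology_generated_by {L. omega_regular L}"

definition buchi_dist :: "(nat \<Rightarrow> 'a) \<Rightarrow> (nat \<Rightarrow> 'a) \<Rightarrow> real" where
  "buchi_dist x y = (if x = y then 0
     else 2 powr (- real (LEAST n. \<exists>A. wf_buchi A \<and> separates A x y \<and> size_buchi A = n)))"

end

theory Submission
  imports Defs "HOL-Library.Ramsey"
begin

definition glang :: "'s set \<Rightarrow> 's set \<Rightarrow> ('s \<times> 'a \<times> 's) set \<Rightarrow> (nat \<Rightarrow> 'a) set" where
 "glang I Fi T = {\<sigma>. \<exists>r. r 0 \<in> I \<and> (\<forall>n. (r n, \<sigma> n, r (Suc n)) \<in> T) \<and> infinite {n. r n \<in> Fi}}"

lemma lang_glang: "lang A = glang (initial A) (final A) (trans A)"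
  by (simp add: lang_def glang_def run_def accepting_def)

definition ren :: "('s \<Rightarrow> nat) \<Rightarrow> 's set \<Rightarrow> 's set \<Rightarrow> 's set \<Rightarrow> ('s \<times> 'a \<times> 's) set \<Rightarrow> 'a buchi" where
 "ren f Q I Fi T = \<lparr>states = f`Q, initial = f`I, final = f`Fi, trans = (\<lambda>(p,a,q). (f p, a, f q)) ` T\<rparr>"

lemma ren_wf:
  assumes "finite Q" "I \<subseteq> Q" "Fi \<subseteq> Q" "T \<subseteq> Q \<times> UNIV \<times> Q"
  shows "wf_buchi (ren f Q I Fi T)"
  using assms unfolding wf_buchi_def ren_def by auto

lemma ren_lang:
  assumes "T \<subseteq> Q \<times> UNIV \<times> Q" "inj_on f Q" "I \<subseteq> Q" "Fi \<subseteq> Q"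
  shows "lang (ren f Q I Fi T) = glang I Fi T"
proof (rule set_eqI, rule iffI)
  fix \<sigma> assume "\<sigma> \<in> lang (ren f Q I Fi T)"
  then obtain r where r0: "r 0 \<in> f ` I" and rt: "\<And>n. (r n, \<sigma> n, r (Suc n)) \<in> (\<lambda>(p,a,q). (f p, a, f q)) ` T"
    and rf: "infinite {n. r n \<in> f ` Fi}"
    by (auto simp: lang_glang glang_def ren_def)
  define g where "g = inv_into Q f"
  have rQ: "r n \<in> f ` Q \<and> (g (r n), \<sigma> n, g (r (Suc n))) \<in> T" for n
  proof -
    obtain p a q where "(p,a,q) \<in> T" "r n = f p" "\<sigma> n = a" "r (Suc n) = f q"
      using rt[of n] by auto
    moreover have "p \<in> Q" "q \<in> Q" using calculation assms(1) by auto
    ultimately show ?thesis using assms(2) by (simp add: g_def)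
  qed
  have "{n. r n \<in> f ` Fi} = {n. g (r n) \<in> Fi}"
  proof -
    { fix n obtain p where p: "p \<in> Q" "r n = f p" using rQ[of n] by auto
      have "r n \<in> f ` Fi \<longleftrightarrow> g (r n) \<in> Fi"
        using p assms(2,4) by (auto simp: g_def inj_on_image_mem_iff) }
    then show ?thesis by auto
  qed
  moreover have "g (r 0) \<in> I" using r0 assms(2,3) by (auto simp: g_def)
  ultimately show "\<sigma> \<in> glang I Fi T" using rQ rf unfolding glang_def by (auto intro!: exI[of _ "g \<circ> r"])
next
  fix \<sigma> assume "\<sigma> \<in> glang I Fi T"
  then obtain r where r0: "r 0 \<in> I" and rt: "\<And>n. (r n, \<sigma> n, r (Suc n)) \<in> T"
    and rf: "infinite {n. r n \<in> Fi}" by (auto simp: glang_def)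
  have rQ: "r n \<in> Q" for n using rt[of n] assms(1) by auto
  have "{n. f (r n) \<in> f ` Fi} = {n. r n \<in> Fi}"
    using rQ assms(2,4) by (auto simp: inj_on_image_mem_iff)
  moreover have "((\<lambda>(p,a,q). (f p, a, f q)) (r n, \<sigma> n, r (Suc n))) \<in> (\<lambda>(p,a,q). (f p, a, f q)) ` T" for n
    using rt[of n] by blast
  ultimately show "\<sigma> \<in> lang (ren f Q I Fi T)" using r0 rf
    unfolding lang_glang glang_def ren_def by (auto intro!: exI[of _ "f \<circ> r"])
qed

lemma omega_regular_glang:
  assumes "finite Q" "I \<subseteq> Q" "Fi \<subseteq> Q" "T \<subseteq> Q \<times> UNIV \<times> Q"
  shows "omega_regular (glang I Fi T)"
proof -
  obtain f :: "_ \<Rightarrow> nat" and n where "f ` Q = {i. i < n}" "inj_on f Q"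
    using finite_imp_inj_to_nat_seg[OF assms(1)] by blast
  then show ?thesis unfolding omega_regular_def using ren_wf[OF assms, of f] ren_lang[of T Q f I Fi] assms by blast
qed

lemma small_normal:
  assumes "wf_buchi (A :: 'a buchi)"
  shows "\<exists>B. wf_buchi B \<and> states B \<subseteq> {..<card (states A)} \<and> lang B = lang A"
proof -
  have fin: "finite (states A)" using assms by (simp add: wf_buchi_def)
  obtain f :: "nat \<Rightarrow> nat" and n where f: "f ` states A = {i. i < n}" "inj_on f (states A)"
    using finite_imp_inj_to_nat_seg[OF fin] by blast
  have n: "n = card (states A)" using f by (metis card_Collect_less_nat card_image)
  let ?B = "ren f (states A) (initial A) (final A) (trans A)"
  have "wf_buchi ?B" "lang ?B = lang A"
    using ren_wf[of "states A" "initial A" "final A" "trans A" f] ren_lang[of "trans A" "states A" f] assms f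
    by (auto simp: wf_buchi_def lang_glang)
  moreover have "states ?B \<subseteq> {..<card (states A)}" using f n by (auto simp: ren_def)
  ultimately show ?thesis by blast
qed

fun reach :: "('s \<times> 'a \<times> 's) set \<Rightarrow> 's \<Rightarrow> 'a list \<Rightarrow> 's \<Rightarrow> bool" where
  "reach T p [] q = (p = q)"
| "reach T p (a # w) q = (\<exists>m. (p, a, m) \<in> T \<and> reach T m w q)"

fun reachF :: "('s \<times> 'a \<times> 's) set \<Rightarrow> 's set \<Rightarrow> 's \<Rightarrow> 'a list \<Rightarrow> 's \<Rightarrow> bool" where
  "reachF T Fi p [] q = False"
| "reachF T Fi p (a # w) q = (\<exists>m. (p, a, m) \<in> T \<and> ((p \<in> Fi \<and> reach T m w q) \<or> reachF T Fi m w q))"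

lemma reach_snoc: "reach T p (w @ [a]) q \<longleftrightarrow> (\<exists>m. reach T p w m \<and> (m, a, q) \<in> T)"
  by (induct w arbitrary: p) auto

lemma reachF_snoc: "reachF T Fi p (w @ [a]) q \<longleftrightarrow>
   (\<exists>m. (m, a, q) \<in> T \<and> (reachF T Fi p w m \<or> (reach T p w m \<and> m \<in> Fi)))"
  by (induct w arbitrary: p) (auto simp: reach_snoc)

definition upd :: "('s \<times> 'a \<times> 's) set \<Rightarrow> 's set \<Rightarrow> ('s \<times> 's) set \<times> ('s \<times> 's) set \<Rightarrow> 'a \<Rightarrow> ('s \<times> 's) set \<times> ('s \<times> 's) set" where
  "upd T Fi P a = ({(p, q). \<exists>m. (p, m) \<in> fst P \<and> (m, a, q) \<in> T},
                   {(p, q). \<exists>m. (m, a, q) \<in> T \<and> ((p, m) \<in> snd P \<or> ((p, m) \<in> fst P \<and> m \<in> Fi))})"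

definition prof :: "('s \<times> 'a \<times> 's) set \<Rightarrow> 's set \<Rightarrow> 's set \<Rightarrow> 'a list \<Rightarrow> ('s \<times> 's) set \<times> ('s \<times> 's) set" where
  "prof T Fi S w = foldl (upd T Fi) (Id_on S, {}) w"

lemma prof_snoc: "prof T Fi S (w @ [a]) = upd T Fi (prof T Fi S w) a"
  by (simp add: prof_def)

lemma prof_sem: "prof T Fi S w = ({(p, q). p \<in> S \<and> reach T p w q}, {(p, q). p \<in> S \<and> reachF T Fi p w q})"
proof (induct w rule: rev_induct)
  case Nil then show ?case by (auto simp: prof_def Id_on_def)
next
  case (snoc a w) then show ?case
    by (auto simp: prof_snoc upd_def reach_snoc reachF_snoc)
qed

lemma run_reach:
  assumes "\<And>n. (r n, \<sigma> n, r (Suc n)) \<in> T"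
  shows "reach T (r i) (map \<sigma> [i..<i+k]) (r (i+k))"
proof (induct k)
  case 0 then show ?case by simp
next
  case (Suc k) then show ?case using assms[of "i+k"] by (auto simp: reach_snoc)
qed

lemma run_reachF:
  assumes "\<And>n. (r n, \<sigma> n, r (Suc n)) \<in> T"
  shows "i \<le> j \<Longrightarrow> j < i + k \<Longrightarrow> r j \<in> Fi \<Longrightarrow> reachF T Fi (r i) (map \<sigma> [i..<i+k]) (r (i+k))"
proof (induct k)
  case 0 then show ?case by simp
next
  case (Suc k)
  show ?case
  proof (cases "j < i + k")
    case True then show ?thesis using Suc assms[of "i+k"] by (auto simp: reachF_snoc)
  next
    case False then have "j = i + k" using Suc by simp
    then show ?thesis using Suc assms[of "i+k"] run_reach[of r \<sigma> T i k, OF assms] by (auto simp: reachF_snoc)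
  qed
qed

lemma reach_path: "reach T p w q \<Longrightarrow> \<exists>\<pi>. \<pi> 0 = p \<and> \<pi> (length w) = q \<and> (\<forall>j<length w. (\<pi> j, w ! j, \<pi> (Suc j)) \<in> T)"
proof (induct w arbitrary: p)
  case Nil then show ?case by (auto intro!: exI[of _ "\<lambda>_. p"])
next
  case (Cons a w)
  then obtain m where m0: "(p, a, m) \<in> T" "reach T m w q" by auto
  then obtain \<pi> where "\<pi> 0 = m" "\<pi> (length w) = q" "\<forall>j<length w. (\<pi> j, w ! j, \<pi> (Suc j)) \<in> T"
    using Cons.hyps by blast
  note m = m0(1) this
  show ?case
    apply (rule exI[of _ "\<lambda>n. if n = 0 then p else \<pi> (n - 1)"])
    using m by (auto simp: nth_Cons' less_Suc_eq_0_disj)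
qed

lemma reachF_path: "reachF T Fi p w q \<Longrightarrow> \<exists>\<pi>. \<pi> 0 = p \<and> \<pi> (length w) = q \<and> (\<forall>j<length w. (\<pi> j, w ! j, \<pi> (Suc j)) \<in> T)
   \<and> (\<exists>j<length w. \<pi> j \<in> Fi)"
proof (induct w arbitrary: p)
  case Nil then show ?case by simp
next
  case (Cons a w)
  then obtain m where m: "(p, a, m) \<in> T" "(p \<in> Fi \<and> reach T m w q) \<or> reachF T Fi m w q" by auto
  then obtain \<pi> where \<pi>: "\<pi> 0 = m" "\<pi> (length w) = q" "\<forall>j<length w. (\<pi> j, w ! j, \<pi> (Suc j)) \<in> T"
     "p \<in> Fi \<or> (\<exists>j<length w. \<pi> j \<in> Fi)"
    using Cons.hyps reach_path by metis
  show ?case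
    apply (rule exI[of _ "\<lambda>n. if n = 0 then p else \<pi> (n - 1)"])
    using m \<pi> by (auto simp: nth_Cons' less_Suc_eq_0_disj)
qed

definition sg :: "(nat \<Rightarrow> nat) \<Rightarrow> nat \<Rightarrow> nat" where "sg b n = (LEAST i. n < b (Suc i))"

lemma sg_props:
  assumes "strict_mono b" "b 0 = 0"
  shows "b (sg b n) \<le> n \<and> n < b (Suc (sg b n))"
proof -
  have ex: "n < b (Suc n)" using strict_mono_imp_increasing[OF assms(1), of "Suc n"] by simp
  have 1: "n < b (Suc (sg b n))" unfolding sg_def by (rule LeastI[of _ n], rule ex)
  have 2: "b (sg b n) \<le> n"
  proof (cases "sg b n")
    case 0 then show ?thesis using assms by simp
  next
    case (Suc k)
    then have "\<not> n < b (Suc k)" using not_less_Least[of k "\<lambda>i. n < b (Suc i)"] unfolding sg_def by simp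
    then show ?thesis using Suc by simp
  qed
  show ?thesis using 1 2 by simp
qed

lemma sg_unique:
  assumes "strict_mono b" "b i \<le> n" "n < b (Suc i)"
  shows "sg b n = i"
  unfolding sg_def
proof (rule Least_equality)
  show "n < b (Suc i)" by fact
  fix j assume j: "n < b (Suc j)"
  show "i \<le> j"
  proof (rule ccontr)
    assume "\<not> i \<le> j" then have "Suc j \<le> i" by simp
    then have "b (Suc j) \<le> b i" using assms(1) strict_mono_less_eq by blast
    then show False using j assms by simp
  qed
qed

definition seg :: "(nat \<Rightarrow> nat) \<Rightarrow> (nat \<Rightarrow> 'a) \<Rightarrow> nat \<Rightarrow> 'a list" where
  "seg b \<sigma> i = map \<sigma> [b i..<b (Suc i)]"

definition le2 :: "'b set \<times> 'b set \<Rightarrow> 'b set \<times> 'b set \<Rightarrow> bool" where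
  "le2 P Q \<longleftrightarrow> fst P \<subseteq> fst Q \<and> snd P \<subseteq> snd Q"

lemma transfer:
  assumes TS: "T \<subseteq> S \<times> UNIV \<times> S" and IS: "I \<subseteq> S"
    and z: "z \<in> glang I Fi T"
    and b: "strict_mono b" "b 0 = 0" and b': "strict_mono b'" "b' 0 = 0"
    and le: "\<And>i. le2 (prof T Fi S (seg b z i)) (prof T Fi S (seg b' y i))"
  shows "y \<in> glang I Fi T"
proof -
  obtain \<rho> where \<rho>0: "\<rho> 0 \<in> I" and \<rho>t: "\<And>n. (\<rho> n, z n, \<rho> (Suc n)) \<in> T"
    and \<rho>f: "infinite {n. \<rho> n \<in> Fi}" using z by (auto simp: glang_def)
  have \<rho>S: "\<rho> n \<in> S" for n
  proof (cases n)
    case 0 then show ?thesis using \<rho>0 IS by auto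
  next
    case (Suc m) then show ?thesis using \<rho>t[of m] TS by auto
  qed
  define Fseg where "Fseg i = (\<exists>j. b i \<le> j \<and> j < b (Suc i) \<and> \<rho> j \<in> Fi)" for i
  define len where "len i = b' (Suc i) - b' i" for i
  have bl: "b i < b (Suc i)" "b' i < b' (Suc i)" for i using b b' by (auto simp: strict_mono_def)
  have segz: "seg b z i = map z [b i..<b i + (b (Suc i) - b i)]" for i
    using bl[of i] by (simp add: seg_def)
  have ex: "\<exists>\<pi>. \<pi> 0 = \<rho> (b i) \<and> \<pi> (len i) = \<rho> (b (Suc i)) \<and>
      (\<forall>j<len i. (\<pi> j, y (b' i + j), \<pi> (Suc j)) \<in> T) \<and> (Fseg i \<longrightarrow> (\<exists>j<len i. \<pi> j \<in> Fi))" for i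
  proof -
    have r1: "reach T (\<rho> (b i)) (seg b z i) (\<rho> (b (Suc i)))"
      using run_reach[of \<rho> z T "b i" "b (Suc i) - b i", OF \<rho>t] bl[of i] by (simp add: segz)
    have "(\<rho> (b i), \<rho> (b (Suc i))) \<in> fst (prof T Fi S (seg b z i))"
      using r1 \<rho>S by (simp add: prof_sem)
    then have r2: "reach T (\<rho> (b i)) (seg b' y i) (\<rho> (b (Suc i)))"
      using le[of i] by (auto simp: le2_def prof_sem)
    have lenw: "length (seg b' y i) = len i" by (simp add: seg_def len_def)
    have nth: "j < len i \<Longrightarrow> seg b' y i ! j = y (b' i + j)" for j
      by (simp add: seg_def len_def)
    show ?thesis
    proof (cases "Fseg i")
      case True
      then obtain j where j: "b i \<le> j" "j < b (Suc i)" "\<rho> j \<in> Fi" by (auto simp: Fseg_def)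
      have "reachF T Fi (\<rho> (b i)) (seg b z i) (\<rho> (b (Suc i)))"
        using run_reachF[of \<rho> z T "b i" j "b (Suc i) - b i", OF \<rho>t] j bl[of i] by (simp add: segz)
      then have "(\<rho> (b i), \<rho> (b (Suc i))) \<in> snd (prof T Fi S (seg b z i))"
        using \<rho>S by (simp add: prof_sem)
      then have "reachF T Fi (\<rho> (b i)) (seg b' y i) (\<rho> (b (Suc i)))"
        using le[of i] by (auto simp: le2_def prof_sem)
      from reachF_path[OF this] show ?thesis using lenw nth by metis
    next
      case False
      from reach_path[OF r2] show ?thesis using lenw nth False by metis
    qed
  qed
  then obtain PP where PP: "\<And>i. PP i 0 = \<rho> (b i) \<and> PP i (len i) = \<rho> (b (Suc i)) \<and>
      (\<forall>j<len i. (PP i j, y (b' i + j), PP i (Suc j)) \<in> T) \<and> (Fseg i \<longrightarrow> (\<exists>j<len i. PP i j \<in> Fi))"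
    by metis
  define r where "r n = PP (sg b' n) (n - b' (sg b' n))" for n
  have sg0: "sg b' 0 = 0" using sg_unique[OF b'(1), of 0 0] b' bl[of 0] by simp
  have r0: "r 0 \<in> I" using PP[of 0] sg0 \<rho>0 b by (simp add: r_def)
  have rt: "(r n, y n, r (Suc n)) \<in> T" for n
  proof -
    define i where "i = sg b' n"
    have i: "b' i \<le> n" "n < b' (Suc i)" using sg_props[OF b', of n] by (auto simp: i_def)
    show ?thesis
    proof (cases "Suc n < b' (Suc i)")
      case True
      then have "sg b' (Suc n) = i" using sg_unique[OF b'(1), of i "Suc n"] i by simp
      then show ?thesis using PP[of i] i True unfolding r_def i_def[symmetric]
        by (auto simp: len_def Suc_diff_le dest!: spec[of _ "n - b' i"])
    next
      case False
      then have e: "Suc n = b' (Suc i)" using i by simp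
      then have "sg b' (Suc n) = Suc i" using sg_unique[OF b'(1), of "Suc i" "Suc n"] bl[of "Suc i"] by simp
      then have "r (Suc n) = PP i (len i)" using PP[of "Suc i"] PP[of i] e by (simp add: r_def)
      moreover have "len i = Suc (n - b' i)" using e i by (simp add: len_def)
      ultimately show ?thesis using PP[of i] i unfolding r_def i_def[symmetric]
        by (auto dest!: spec[of _ "n - b' i"])
    qed
  qed
  have "infinite {n. r n \<in> Fi}"
    unfolding infinite_nat_iff_unbounded_le
  proof
    fix m
    obtain j where j: "j \<ge> b m" "\<rho> j \<in> Fi" using \<rho>f unfolding infinite_nat_iff_unbounded_le by blast
    define i where "i = sg b j"
    have i: "b i \<le> j" "j < b (Suc i)" using sg_props[OF b, of j] by (auto simp: i_def)
    have im: "m \<le> i"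
    proof (rule ccontr)
      assume "\<not> m \<le> i" then have "Suc i \<le> m" by simp
      then have "b (Suc i) \<le> b m" using b(1) strict_mono_less_eq by blast
      then show False using i j by simp
    qed
    have "Fseg i" using i j by (auto simp: Fseg_def)
    then obtain k where k: "k < len i" "PP i k \<in> Fi" using PP[of i] by blast
    have "sg b' (b' i + k) = i" using sg_unique[OF b'(1), of i "b' i + k"] k by (simp add: len_def)
    then have "r (b' i + k) \<in> Fi" using k by (simp add: r_def)
    moreover have "b' i + k \<ge> m" using strict_mono_imp_increasing[OF b'(1), of i] im by simp
    ultimately show "\<exists>n\<ge>m. n \<in> {n. r n \<in> Fi}" by blast
  qed
  then show ?thesis using r0 rt by (auto simp: glang_def)
qed

definition I0 :: "'s set \<Rightarrow> ('s \<times> 's) set \<times> ('s \<times> 's) set" where "I0 S = (Id_on S, {})"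

definition QB :: "'s set \<Rightarrow> (nat \<times> (('s \<times> 's) set \<times> ('s \<times> 's) set)) set" where
  "QB S = {0,1,2::nat} \<times> (Pow (S \<times> S) \<times> Pow (S \<times> S))"

definition GG :: "'b \<Rightarrow> 'b \<Rightarrow> nat \<Rightarrow> 'b" where "GG U V k = (if k = 0 then U else V)"

definition TB where
  "TB T Fi S U V = {((k,P),a,(k',P')). (k,P) \<in> QB S \<and> (k',P') \<in> QB S \<and>
      (if k' = 2 then P' = I0 S \<and> le2 (upd T Fi P a) (GG U V k)
       else P' = upd T Fi P a \<and> k' = (if k = 0 then 0 else 1))}"

lemma upd_sub: "fst P \<subseteq> S \<times> S \<Longrightarrow> snd P \<subseteq> S \<times> S \<Longrightarrow> T \<subseteq> S \<times> UNIV \<times> S \<Longrightarrow>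
   fst (upd T Fi P a) \<subseteq> S \<times> S \<and> snd (upd T Fi P a) \<subseteq> S \<times> S"
  unfolding upd_def by auto

lemma prof_sub: "T \<subseteq> S \<times> UNIV \<times> S \<Longrightarrow> fst (prof T Fi S w) \<subseteq> S \<times> S \<and> snd (prof T Fi S w) \<subseteq> S \<times> S"
proof (induct w rule: rev_induct)
  case Nil then show ?case by (auto simp: prof_def Id_on_def)
next
  case (snoc a w) then show ?case using upd_sub by (metis prof_snoc)
qed

lemma prof_QB: "T \<subseteq> S \<times> UNIV \<times> S \<Longrightarrow> k \<in> {0,1,2} \<Longrightarrow> (k, prof T Fi S w) \<in> QB S"
  using prof_sub[of T S Fi w] by (cases "prof T Fi S w") (auto simp: QB_def)

lemma prof_Nil: "prof T Fi S [] = I0 S" by (simp add: prof_def I0_def)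

lemma B_accepts:
  assumes TS: "T \<subseteq> S \<times> UNIV \<times> S"
    and b': "strict_mono b'" "b' 0 = 0"
    and U: "prof T Fi S (seg b' y 0) = U" and V: "\<And>i. i > 0 \<Longrightarrow> prof T Fi S (seg b' y i) = V"
  shows "y \<in> glang {(0, I0 S)} {(2, I0 S)} (TB T Fi S U V)"
proof -
  define ph where "ph n = (if sg b' n = 0 then 0 else if n = b' (sg b' n) then 2 else (1::nat))" for n
  define r where "r n = (ph n, prof T Fi S (map y [b' (sg b' n)..<n]))" for n
  have bl: "b' i < b' (Suc i)" for i using b' by (auto simp: strict_mono_def)
  have sg0: "sg b' 0 = 0" using sg_unique[OF b'(1), of 0 0] b' bl[of 0] by simp
  have r0: "r 0 = (0, I0 S)" by (simp add: r_def ph_def sg0 b' prof_Nil)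
  have rt: "(r n, y n, r (Suc n)) \<in> TB T Fi S U V" for n
  proof -
    define i where "i = sg b' n"
    have i: "b' i \<le> n" "n < b' (Suc i)" using sg_props[OF b', of n] by (auto simp: i_def)
    have Q: "r m \<in> QB S" for m unfolding r_def by (rule prof_QB[OF TS]) (auto simp: ph_def)
    have ext: "prof T Fi S (map y [b' i..<Suc n]) = upd T Fi (prof T Fi S (map y [b' i..<n])) (y n)"
      using i by (simp add: prof_snoc)
    show ?thesis
    proof (cases "Suc n < b' (Suc i)")
      case True
      then have s: "sg b' (Suc n) = i" using sg_unique[OF b'(1), of i "Suc n"] i by simp
      have "ph (Suc n) \<noteq> 2" "ph (Suc n) = (if ph n = 0 then 0 else 1)"
        using s i unfolding ph_def i_def[symmetric] by auto
      then show ?thesis using Q[of n] Q[of "Suc n"] ext s unfolding TB_def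
        by (simp add: r_def i_def[symmetric])
    next
      case False
      then have e: "Suc n = b' (Suc i)" using i by simp
      then have s: "sg b' (Suc n) = Suc i" using sg_unique[OF b'(1), of "Suc i" "Suc n"] bl[of "Suc i"] by simp
      have rs: "r (Suc n) = (2, I0 S)" using s e by (simp add: r_def ph_def prof_Nil)
      have "prof T Fi S (map y [b' i..<Suc n]) = prof T Fi S (seg b' y i)" using e by (simp add: seg_def)
      also have "\<dots> = GG U V (ph n)"
        using U V[of i] by (cases "i = 0") (auto simp: GG_def ph_def i_def)
      finally have "le2 (upd T Fi (snd (r n)) (y n)) (GG U V (fst (r n)))"
        using ext by (simp add: r_def le2_def i_def)
      then show ?thesis using Q[of n] Q[of "Suc n"] rs unfolding TB_def by (cases "r n") auto
    qed
  qed
  have "r (b' (Suc i)) = (2, I0 S)" for i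
  proof -
    have "sg b' (b' (Suc i)) = Suc i" using sg_unique[OF b'(1), of "Suc i"] bl[of "Suc i"] by simp
    then show ?thesis by (simp add: r_def ph_def prof_Nil)
  qed
  then have "range (\<lambda>i. b' (Suc i)) \<subseteq> {n. r n \<in> {(2, I0 S)}}" by auto
  moreover have "infinite (range (\<lambda>i. b' (Suc i)))"
    using b'(1) by (intro range_inj_infinite) (auto simp: inj_def strict_mono_eq)
  ultimately have "infinite {n. r n \<in> {(2, I0 S)}}" using infinite_super by blast
  then show ?thesis using r0 rt unfolding glang_def by auto
qed

lemma B_factor:
  assumes z: "z \<in> glang {(0, I0 S)} {(2, I0 S)} (TB T Fi S U V)"
  shows "\<exists>b. strict_mono b \<and> b 0 = 0 \<and> le2 (prof T Fi S (seg b z 0)) U \<and>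
              (\<forall>i>0. le2 (prof T Fi S (seg b z i)) V)"
proof -
  obtain r where r0: "r 0 = (0, I0 S)" and rt: "\<And>n. (r n, z n, r (Suc n)) \<in> TB T Fi S U V"
    and rf: "infinite {n. r n \<in> {(2, I0 S)}}" using z by (auto simp: glang_def)
  define M where "M = {n. fst (r n) = 2}"
  have "{n. r n \<in> {(2, I0 S)}} \<subseteq> M" by (auto simp: M_def)
  then have Minf: "infinite M" using rf infinite_super by blast
  have M0: "0 \<notin> M" using r0 by (simp add: M_def)
  have Msnd: "n \<in> M \<Longrightarrow> snd (r n) = I0 S" for n
  proof -
    assume "n \<in> M"
    then obtain m where "n = Suc m" using M0 by (cases n) auto
    then show ?thesis using rt[of m] \<open>n \<in> M\<close> unfolding TB_def M_def by (cases "r m", cases "r n") auto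
  qed
  define b where "b i = (case i of 0 \<Rightarrow> 0 | Suc j \<Rightarrow> enumerate M j)" for i
  have bSuc: "b (Suc i) = enumerate M i" for i by (simp add: b_def)
  have bM: "b (Suc i) \<in> M" for i using enumerate_in_set[OF Minf] by (simp add: bSuc)
  have bs: "b i < b (Suc i)" for i
  proof (cases i)
    case 0 then show ?thesis using bM[of 0] M0 by (simp add: b_def) (metis gr0I)
  next
    case (Suc j) then show ?thesis using enumerate_step[OF Minf] by (simp add: b_def)
  qed
  then have smb: "strict_mono b" by (simp add: strict_mono_Suc_iff)
  have between: "b i < t \<Longrightarrow> t < b (Suc i) \<Longrightarrow> t \<notin> M" for i t
  proof
    assume t: "b i < t" "t < b (Suc i)" "t \<in> M"
    obtain k where k: "enumerate M k = t" using enumerate_Ex[OF Minf t(3)] by blast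
    show False
    proof (cases i)
      case 0 then show ?thesis using t k enumerate_mono_iff[OF Minf, of k 0] by (simp add: b_def)
    next
      case (Suc j) then show ?thesis using t k enumerate_mono_iff[OF Minf, of k "Suc j"]
          enumerate_mono_iff[OF Minf, of j k] by (simp add: b_def)
    qed
  qed
  have bsnd: "snd (r (b i)) = I0 S" for i
    using r0 Msnd bM by (cases i) (auto simp: b_def)
  have bfst: "GG U V (fst (r (b i))) = (if i = 0 then U else V)" for i
    using r0 bM by (cases i) (auto simp: b_def GG_def M_def)
  have block: "le2 (prof T Fi S (map z [m..<m'])) (GG U V (fst (r m)))"
    if mm: "m < m'" and sm: "snd (r m) = I0 S" and nm: "\<And>t. m < t \<Longrightarrow> t < m' \<Longrightarrow> t \<notin> M"
      and mM: "m' \<in> M" for m m'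
  proof -
    have inv: "m + j < m' \<longrightarrow> snd (r (m + j)) = prof T Fi S (map z [m..<m+j]) \<and>
                 GG U V (fst (r (m + j))) = GG U V (fst (r m))" for j
    proof (induct j)
      case 0 then show ?case using sm by (simp add: prof_Nil)
    next
      case (Suc j)
      show ?case
      proof
        assume lt: "m + Suc j < m'"
        then have "Suc (m + j) \<notin> M" using nm by simp
        then have "snd (r (Suc (m+j))) = upd T Fi (snd (r (m+j))) (z (m+j)) \<and>
            GG U V (fst (r (Suc (m+j)))) = GG U V (fst (r (m+j)))"
          using rt[of "m+j"] unfolding TB_def M_def GG_def
          by (cases "r (m+j)", cases "r (Suc (m+j))") auto
        then show "snd (r (m + Suc j)) = prof T Fi S (map z [m..<m + Suc j]) \<and>
                 GG U V (fst (r (m + Suc j))) = GG U V (fst (r m))"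
          using Suc lt by (simp add: prof_snoc)
      qed
    qed
    define j where "j = m' - m - 1"
    have mj: "m + j < m'" "Suc (m + j) = m'" using mm by (auto simp: j_def)
    have "le2 (upd T Fi (snd (r (m+j))) (z (m+j))) (GG U V (fst (r (m+j))))"
      using rt[of "m+j"] mj mM unfolding TB_def M_def by (cases "r (m+j)", cases "r (Suc (m+j))") auto
    moreover have "map z [m..<m'] = map z [m..<m+j] @ [z (m+j)]" using mj(2)[symmetric] by simp
    ultimately show ?thesis using inv[of j] mj by (simp add: prof_snoc)
  qed
  have L: "le2 (prof T Fi S (seg b z i)) (if i = 0 then U else V)" for i
    using block[of "b i" "b (Suc i)", OF bs bsnd between bM] bfst[of i] by (simp add: seg_def)
  have "le2 (prof T Fi S (seg b z 0)) U" using L[of 0] by simp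
  moreover have "\<forall>i>0. le2 (prof T Fi S (seg b z i)) V" using L by (metis not_gr0)
  ultimately show ?thesis using smb by (auto intro!: exI[of _ b] simp: b_def)
qed

lemma compl_nbhd:
  assumes wf: "wf_buchi A" and y: "y \<notin> lang A"
  shows "\<exists>L'. omega_regular L' \<and> y \<in> L' \<and> L' \<inter> lang A = {}"
proof -
  define S where "S = states A"
  define T where "T = trans A"
  define Fi where "Fi = final A"
  define I where "I = initial A"
  have TS: "T \<subseteq> S \<times> UNIV \<times> S" and IS: "I \<subseteq> S" and finS: "finite S" and FS: "Fi \<subseteq> S"
    using wf by (auto simp: wf_buchi_def S_def T_def I_def Fi_def)
  define col where "col i j = prof T Fi S (map y [i..<j])" for i j
  define C where "C = Pow (S \<times> S) \<times> Pow (S \<times> S)"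
  have finC: "finite C" using finS by (simp add: C_def)
  have colC: "col i j \<in> C" for i j using prof_sub[OF TS, of Fi "map y [i..<j]"]
    by (cases "col i j") (auto simp: C_def col_def)
  obtain h where h: "bij_betw h C {0..<card C}" using ex_bij_betw_finite_nat[OF finC] by blast
  define f where "f X = h (col (Min X) (Max X))" for X
  have inf0: "infinite {0::nat<..}" by (simp add: infinite_Ioi)
  have hC: "\<And>c. c \<in> C \<Longrightarrow> h c < card C" using h by (auto simp: bij_betw_def)
  have part: "\<forall>x\<in>{0::nat<..}. \<forall>y\<in>{0<..}. x \<noteq> y \<longrightarrow> f {x, y} < card C"
    unfolding f_def using hC colC by blast
  obtain Y t where Y: "Y \<subseteq> {0<..}" "infinite Y" "t < card C"
    and hom: "\<forall>x\<in>Y. \<forall>y\<in>Y. x\<noteq>y \<longrightarrow> f {x, y} = t"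
    using Ramsey2[OF inf0 part] by blast
  define e where "e = enumerate Y"
  define b' where "b' i = (case i of 0 \<Rightarrow> 0 | Suc j \<Rightarrow> e j)" for i
  have eY: "e i \<in> Y" for i using enumerate_in_set[OF Y(2)] by (simp add: e_def)
  have es: "e i < e (Suc i)" for i using enumerate_step[OF Y(2)] by (simp add: e_def)
  have bs: "b' i < b' (Suc i)" for i
    using eY[of 0] Y(1) es by (cases i) (auto simp: b'_def)
  then have smb: "strict_mono b'" by (simp add: strict_mono_Suc_iff)
  have b0: "b' 0 = 0" by (simp add: b'_def)
  define U where "U = prof T Fi S (seg b' y 0)"
  define V where "V = prof T Fi S (seg b' y 1)"
  have colV: "col (e j) (e (Suc j)) = col (e 0) (e 1)" for j
  proof -
    have n1: "e j \<noteq> e (Suc j)" "e 0 \<noteq> e 1" using es[of j] es[of 0] by auto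
    have "f {e j, e (Suc j)} = t" using hom eY n1(1) by blast
    moreover have "f {e 0, e 1} = t" using hom eY n1(2) by blast
    ultimately have "h (col (e j) (e (Suc j))) = h (col (e 0) (e 1))"
      using es[of j] es[of 0] by (simp add: f_def)
    moreover have "inj_on h C" using h by (simp add: bij_betw_def)
    ultimately show ?thesis using colC inj_onD by metis
  qed
  have V': "i > 0 \<Longrightarrow> prof T Fi S (seg b' y i) = V" for i
    using colV[of "i - 1"] by (cases i) (auto simp: V_def seg_def b'_def col_def)
  define L' where "L' = glang {(0, I0 S)} {(2, I0 S)} (TB T Fi S U V)"
  have "omega_regular L'"
    unfolding L'_def
  proof (rule omega_regular_glang[of "QB S"])
    show "finite (QB S)" using finS by (simp add: QB_def)
    show "{(0, I0 S)} \<subseteq> QB S" "{(2, I0 S)} \<subseteq> QB S" by (auto simp: QB_def I0_def Id_on_def)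
    show "TB T Fi S U V \<subseteq> QB S \<times> UNIV \<times> QB S" unfolding TB_def by blast
  qed
  moreover have "y \<in> L'" unfolding L'_def
    by (rule B_accepts[OF TS smb b0]) (auto simp: U_def V')
  moreover have "L' \<inter> lang A = {}"
  proof (rule ccontr)
    assume "L' \<inter> lang A \<noteq> {}"
    then obtain z where z: "z \<in> L'" "z \<in> glang I Fi T"
      by (auto simp: lang_glang I_def Fi_def T_def)
    obtain b where b: "strict_mono b" "b 0 = 0" "le2 (prof T Fi S (seg b z 0)) U"
      "\<forall>i>0. le2 (prof T Fi S (seg b z i)) V"
      using B_factor[of z] z(1) unfolding L'_def by blast
    have "le2 (prof T Fi S (seg b z i)) (prof T Fi S (seg b' y i))" for i
      using b V'[of i] by (cases "i = 0") (auto simp: U_def)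
    then have "y \<in> glang I Fi T" using transfer[OF TS IS z(2) b(1,2) smb b0] by blast
    then show False using y by (simp add: lang_glang I_def Fi_def T_def)
  qed
  ultimately show ?thesis by blast
qed

lemma pow2_eq: "(2::real) powr - real n = 1 / 2^n" by (simp add: powr_minus powr_realpow divide_inverse)

lemma pow2_small: "(r::real) > 0 \<Longrightarrow> \<exists>n. (2::real) powr - real n < r"
proof -
  assume "r > 0"
  then obtain n where "(1/2::real) ^ n < r" using real_arch_pow_inv[of r "1/2"] by auto
  then show ?thesis by (auto simp: pow2_eq power_one_over)
qed

definition cyl :: "nat \<Rightarrow> 'a \<Rightarrow> 'a buchi" where
  "cyl k c = \<lparr>states = {..Suc k}, initial = {0}, final = {Suc k},
     trans = {(i, a, Suc i) | i a. i < k} \<union> {(k, c, Suc k)} \<union> {(Suc k, a, Suc k) | a. True}\<rparr>"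

lemma cyl_wf: "wf_buchi (cyl k c)" by (auto simp: cyl_def wf_buchi_def)
lemma cyl_size: "size_buchi (cyl k c) = Suc (Suc k)" by (simp add: cyl_def size_buchi_def)

lemma cyl_lang: "lang (cyl k c) = {z. z k = c}"
proof (rule set_eqI, rule iffI)
  fix z assume "z \<in> lang (cyl k c)"
  then obtain r where r0: "r 0 = 0" and rt: "\<And>n. (r n, z n, r (Suc n)) \<in> trans (cyl k c)"
    by (auto simp: lang_def run_def cyl_def)
  have "i \<le> k \<longrightarrow> r i = i" for i
  proof (induct i)
    case 0 then show ?case using r0 by simp
  next
    case (Suc i) then show ?case using rt[of i] by (auto simp: cyl_def)
  qed
  then have "r k = k" by simp
  then show "z \<in> {z. z k = c}" using rt[of k] by (auto simp: cyl_def)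
next
  fix z assume z: "z \<in> {z. z k = c}"
  define r where "r n = min n (Suc k)" for n
  have "(r n, z n, r (Suc n)) \<in> trans (cyl k c)" for n
  proof -
    consider "n < k" | "n = k" | "n > k" by linarith
    then show ?thesis
    proof cases
      case 1 then have "r n = n" "r (Suc n) = Suc n" by (auto simp: r_def)
      then show ?thesis using 1 unfolding cyl_def by auto
    next
      case 2 then have "r n = k" "r (Suc n) = Suc k" by (auto simp: r_def)
      then show ?thesis using 2 z unfolding cyl_def by auto
    next
      case 3 then have "r n = Suc k" "r (Suc n) = Suc k" by (auto simp: r_def)
      then show ?thesis unfolding cyl_def by auto
    qed
  qed
  moreover have "{n. r n \<in> final (cyl k c)} = {Suc k..}" by (auto simp: r_def cyl_def)
  moreover have "infinite {Suc k..}" unfolding infinite_nat_iff_unbounded_le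
  proof
    fix m show "\<exists>n\<ge>m. n \<in> {Suc k..}" by (rule exI[of _ "m + Suc k"]) auto
  qed
  moreover have "r 0 \<in> initial (cyl k c)" by (simp add: r_def cyl_def)
  ultimately show "z \<in> lang (cyl k c)"
    unfolding lang_def run_def accepting_def by auto
qed

definition aom :: "'a \<Rightarrow> 'a buchi" where
  "aom a = \<lparr>states = {0}, initial = {0}, final = {0}, trans = {(0, a, 0)}\<rparr>"

lemma aom_wf: "wf_buchi (aom a)" by (auto simp: aom_def wf_buchi_def)
lemma aom_size: "size_buchi (aom a) = 1" by (simp add: aom_def size_buchi_def)
lemma aom_lang: "lang (aom a) = {\<lambda>_. a}"
proof (rule set_eqI, rule iffI)
  fix z assume "z \<in> lang (aom a)"
  then obtain r where rt: "\<And>n. (r n, z n, r (Suc n)) \<in> trans (aom a)"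
    by (auto simp: lang_def run_def)
  then have "z n = a" for n using rt[of n] by (auto simp: aom_def)
  then show "z \<in> {\<lambda>_. a}" by auto
next
  fix z :: "nat \<Rightarrow> 'a" assume "z \<in> {\<lambda>_. a}"
  then show "z \<in> lang (aom a)"
    by (auto simp: lang_def run_def accepting_def aom_def intro!: exI[of _ "\<lambda>_. 0"])
qed

definition sepsz :: "(nat \<Rightarrow> 'a) \<Rightarrow> (nat \<Rightarrow> 'a) \<Rightarrow> nat" where
  "sepsz x y = (LEAST n. \<exists>A. wf_buchi A \<and> separates A x y \<and> size_buchi A = n)"

lemma dist_eq: "x \<noteq> y \<Longrightarrow> buchi_dist x y = 2 powr - real (sepsz x y)"
  by (simp add: buchi_dist_def sepsz_def)

lemma sep_exists: "x \<noteq> y \<Longrightarrow> \<exists>A. wf_buchi A \<and> separates A x y"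
proof -
  assume "x \<noteq> y"
  then obtain k where "x k \<noteq> y k" by (auto simp: fun_eq_iff)
  then have "separates (cyl k (x k)) x y" by (simp add: separates_def cyl_lang)
  then show ?thesis using cyl_wf[of k "x k"] by blast
qed

lemma sep_wit: "x \<noteq> y \<Longrightarrow> \<exists>A. wf_buchi A \<and> separates A x y \<and> size_buchi A = sepsz x y"
proof -
  assume "x \<noteq> y"
  then obtain A where "wf_buchi A" "separates A x y" using sep_exists by blast
  then have "\<exists>n. \<exists>A. wf_buchi A \<and> separates A x y \<and> size_buchi A = n" by blast
  then show ?thesis unfolding sepsz_def by (rule LeastI_ex)
qed

lemma sep_le: "wf_buchi A \<Longrightarrow> separates A x y \<Longrightarrow> sepsz x y \<le> size_buchi A"
  unfolding sepsz_def by (rule Least_le) blast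

lemma dist_ge: "wf_buchi A \<Longrightarrow> separates A x y \<Longrightarrow> buchi_dist x y \<ge> 2 powr - real (size_buchi A)"
proof -
  assume a: "wf_buchi A" "separates A x y"
  then have "x \<noteq> y" by (auto simp: separates_def)
  then show ?thesis using sep_le[OF a] by (simp add: dist_eq)
qed

lemma dist_small:
  assumes "\<And>A. wf_buchi A \<Longrightarrow> size_buchi A \<le> n \<Longrightarrow> \<not> separates A x y"
  shows "buchi_dist x y \<le> 2 powr - real (Suc n)"
proof (cases "x = y")
  case True then show ?thesis by (simp add: buchi_dist_def)
next
  case False
  then obtain A where A: "wf_buchi A" "separates A x y" "size_buchi A = sepsz x y" using sep_wit[OF False] by blast
  then have "\<not> size_buchi A \<le> n" using assms by blast
  then have "sepsz x y \<ge> Suc n" using A(3) by linarith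
  then show ?thesis using False by (simp add: dist_eq)
qed

lemma sep_sym: "separates A x y \<longleftrightarrow> separates A y x" by (auto simp: separates_def)

lemma dist_pos: "buchi_dist x y \<ge> 0" by (simp add: buchi_dist_def)

lemma metric: "Metric_space (UNIV :: (nat \<Rightarrow> 'a) set) buchi_dist"
proof
  fix x y z :: "nat \<Rightarrow> 'a"
  show "0 \<le> buchi_dist x y" by (rule dist_pos)
  have "(\<lambda>n. \<exists>A. wf_buchi A \<and> separates A x y \<and> size_buchi A = n) =
        (\<lambda>n. \<exists>A. wf_buchi A \<and> separates A y x \<and> size_buchi A = n)"
    by (intro ext) (metis sep_sym)
  then have "sepsz x y = sepsz y x" by (simp add: sepsz_def)
  then show "buchi_dist x y = buchi_dist y x"
    by (cases "x = y") (auto simp: dist_eq)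
  show "buchi_dist x y = 0 \<longleftrightarrow> x = y" by (simp add: buchi_dist_def)
  show "buchi_dist x z \<le> buchi_dist x y + buchi_dist y z"
  proof (cases "x = z")
    case True then show ?thesis using dist_pos[of x y] dist_pos[of y z] by (simp add: buchi_dist_def)
  next
    case False
    then obtain A where A: "wf_buchi A" "separates A x z" "size_buchi A = sepsz x z" using sep_wit[OF False] by blast
    have dz: "buchi_dist x z = 2 powr - real (size_buchi A)" using A(3) False by (simp add: dist_eq)
    have "separates A x y \<or> separates A y z" using A(2) by (auto simp: separates_def)
    then have "buchi_dist x z \<le> buchi_dist x y \<or> buchi_dist x z \<le> buchi_dist y z"
      using dist_ge[OF A(1), of x y] dist_ge[OF A(1), of y z] dz by auto
    then show ?thesis using dist_pos[of x y] dist_pos[of y z] by linarith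
  qed
qed

lemma mopen_regular:
  assumes "omega_regular (L :: (nat \<Rightarrow> 'a) set)"
  shows "openin (Metric_space.mtopology UNIV buchi_dist) L"
proof -
  interpret M: Metric_space "UNIV :: (nat \<Rightarrow> 'a) set" buchi_dist by (rule metric)
  obtain A where A: "wf_buchi A" "lang A = L" using assms by (auto simp: omega_regular_def)
  show ?thesis unfolding M.openin_mtopology
  proof (intro conjI allI impI)
    fix x assume x: "x \<in> L"
    show "\<exists>r>0. M.mball x r \<subseteq> L"
    proof (intro exI conjI)
      show "(2::real) powr - real (size_buchi A) > 0" by simp
      show "M.mball x (2 powr - real (size_buchi A)) \<subseteq> L"
      proof
        fix y assume y: "y \<in> M.mball x (2 powr - real (size_buchi A))"
        show "y \<in> L"
        proof (rule ccontr)
          assume "y \<notin> L"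
          then have "separates A x y" using x A(2) by (simp add: separates_def)
          then have "buchi_dist x y \<ge> 2 powr - real (size_buchi A)" by (rule dist_ge[OF A(1)])
          then show False using y by (simp add: M.mball_def)
        qed
      qed
    qed
  qed simp
qed

lemma buchi_record_eq: "(B :: 'a buchi) = \<lparr>states = states B, initial = initial B, final = final B, trans = trans B\<rparr>"
  by simp

lemma finite_small_langs: "finite (lang ` {A :: ('a::finite) buchi. wf_buchi A \<and> size_buchi A \<le> n})"
proof -
  define X where "X = {..<n}"
  define mk where "mk = (\<lambda>(s, i, f, t). \<lparr>states = s, initial = i, final = f, trans = t\<rparr> :: 'a buchi)"
  have "{B :: 'a buchi. wf_buchi B \<and> states B \<subseteq> X} \<subseteq> mk ` (Pow X \<times> Pow X \<times> Pow X \<times> Pow (X \<times> UNIV \<times> X))"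
  proof
    fix B :: "'a buchi" assume "B \<in> {B. wf_buchi B \<and> states B \<subseteq> X}"
    then have "(states B, initial B, final B, trans B) \<in> Pow X \<times> Pow X \<times> Pow X \<times> Pow (X \<times> UNIV \<times> X)"
      by (auto simp: wf_buchi_def)
    moreover have "B = mk (states B, initial B, final B, trans B)" by (simp add: mk_def)
    ultimately show "B \<in> mk ` (Pow X \<times> Pow X \<times> Pow X \<times> Pow (X \<times> UNIV \<times> X))" by blast
  qed
  moreover have "finite (Pow X \<times> Pow X \<times> Pow X \<times> Pow (X \<times> (UNIV :: 'a set) \<times> X))"
    by (simp add: X_def)
  ultimately have fin: "finite {B :: 'a buchi. wf_buchi B \<and> states B \<subseteq> X}"
    by (meson finite_imageI finite_subset)
  have "lang ` {A :: 'a buchi. wf_buchi A \<and> size_buchi A \<le> n} \<subseteq> lang ` {B. wf_buchi B \<and> states B \<subseteq> X}"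
  proof
    fix L assume "L \<in> lang ` {A :: 'a buchi. wf_buchi A \<and> size_buchi A \<le> n}"
    then obtain A :: "'a buchi" where A: "wf_buchi A" "size_buchi A \<le> n" "L = lang A" by auto
    obtain B :: "'a buchi" where "wf_buchi B" "states B \<subseteq> {..<card (states A)}" "lang B = lang A"
      using small_normal[OF A(1)] by blast
    moreover have "{..<card (states A)} \<subseteq> X" using A(2) by (auto simp: X_def size_buchi_def)
    ultimately show "L \<in> lang ` {B. wf_buchi B \<and> states B \<subseteq> X}" using A(3) by blast
  qed
  then show ?thesis using fin by (meson finite_imageI finite_subset)
qed

lemma compl_open:
  assumes "wf_buchi (A :: ('a::finite) buchi)"
  shows "openin (buchi_topology :: (nat \<Rightarrow> 'a) topology) (- lang A)"
proof (subst openin_subopen, intro ballI)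
  fix y assume "y \<in> - lang A"
  then obtain L' where L': "omega_regular L'" "y \<in> L'" "L' \<inter> lang A = {}"
    using compl_nbhd[OF assms] by blast
  have "openin buchi_topology L'" unfolding buchi_topology_def openin_topology_generated_by_iff
    using L'(1) by (auto intro: generate_topology_on.Basis)
  then show "\<exists>T. openin buchi_topology T \<and> y \<in> T \<and> T \<subseteq> - lang A" using L' by blast
qed

lemma mtop_eq: "Metric_space.mtopology (UNIV :: (nat \<Rightarrow> ('a::finite)) set) buchi_dist = buchi_topology"
proof -
  interpret M: Metric_space "UNIV :: (nat \<Rightarrow> 'a) set" buchi_dist by (rule metric)
  have 1: "openin M.mtopology S" if "openin (buchi_topology :: (nat \<Rightarrow> 'a) topology) S" for S
  proof -
    have "generate_topology_on {L. omega_regular L} S"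
      using that unfolding buchi_topology_def openin_topology_generated_by_iff .
    then show ?thesis
    proof (induct rule: generate_topology_on.induct)
      case Empty then show ?case by simp
    next
      case (Int a b) then show ?case by (simp add: openin_Int)
    next
      case (UN K) then show ?case by (intro openin_Union) auto
    next
      case (Basis s) then show ?case using mopen_regular by blast
    qed
  qed
  have 2: "openin (buchi_topology :: (nat \<Rightarrow> 'a) topology) U" if U: "openin M.mtopology U" for U
  proof (subst openin_subopen, intro ballI)
    fix x assume x: "x \<in> U"
    then obtain r where r: "r > 0" "M.mball x r \<subseteq> U" using U unfolding M.openin_mtopology by blast
    obtain n where n: "(2::real) powr - real n < r" using pow2_small[OF r(1)] by blast
    define Ls where "Ls = lang ` {A :: 'a buchi. wf_buchi A \<and> size_buchi A \<le> n}"
    define F where "F = (\<lambda>L. if x \<in> L then L else - L) ` Ls"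
    have finF: "finite F" unfolding F_def Ls_def by (intro finite_imageI finite_small_langs)
    have "aom undefined \<in> {A :: 'a buchi. wf_buchi A \<and> size_buchi A \<le> n} \<or>
          (\<lparr>states = {}, initial = {}, final = {}, trans = {}\<rparr> :: 'a buchi) \<in> {A. wf_buchi A \<and> size_buchi A \<le> n}"
      by (simp add: wf_buchi_def size_buchi_def)
    then have "F \<noteq> {}" unfolding F_def Ls_def by blast
    moreover have "openin buchi_topology X" if "X \<in> F" for X
    proof -
      obtain A :: "'a buchi" where A: "wf_buchi A" "X = (if x \<in> lang A then lang A else - lang A)"
        using \<open>X \<in> F\<close> unfolding F_def Ls_def by blast
      show ?thesis
      proof (cases "x \<in> lang A")
        case True
        have "omega_regular (lang A)" using A(1) by (auto simp: omega_regular_def)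
        then show ?thesis using True A(2) unfolding buchi_topology_def openin_topology_generated_by_iff
          by (auto intro: generate_topology_on.Basis)
      next
        case False then show ?thesis using A compl_open by simp
      qed
    qed
    ultimately have op: "openin buchi_topology (\<Inter>F)" using finF by (intro openin_Inter) auto
    have xin: "x \<in> \<Inter>F" unfolding F_def by auto
    have sub: "\<Inter>F \<subseteq> U"
    proof
      fix y assume y: "y \<in> \<Inter>F"
      have "\<not> separates A x y" if "wf_buchi A" "size_buchi A \<le> n" for A
      proof -
        have "(if x \<in> lang A then lang A else - lang A) \<in> F" using that unfolding F_def Ls_def by blast
        then show ?thesis using y by (auto simp: separates_def split: if_splits)
      qed
      then have "buchi_dist x y \<le> 2 powr - real (Suc n)" by (rule dist_small)
      moreover have "(2::real) powr - real (Suc n) \<le> 2 powr - real n" by simp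
      ultimately have "buchi_dist x y < r" using n by linarith
      then show "y \<in> U" using r(2) by (auto simp: M.mball_def)
    qed
    show "\<exists>T. openin buchi_topology T \<and> x \<in> T \<and> T \<subseteq> U" using op xin sub by blast
  qed
  show ?thesis using 1 2 by (auto simp: topology_eq)
qed

definition post :: "'a buchi \<Rightarrow> 'a \<Rightarrow> nat set \<Rightarrow> nat set" where
  "post A a X = {q. \<exists>p\<in>X. (p, a, q) \<in> trans A}"

definition accb :: "'a buchi \<Rightarrow> 'a \<Rightarrow> nat \<Rightarrow> bool" where
  "accb A b q = (\<exists>\<rho>. \<rho> 0 = q \<and> (\<forall>n. (\<rho> n, b, \<rho> (Suc n)) \<in> trans A) \<and> infinite {n. \<rho> n \<in> final A})"

definition wd :: "'a \<Rightarrow> 'a \<Rightarrow> nat \<Rightarrow> nat \<Rightarrow> 'a" where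
  "wd a b N = (\<lambda>i. if i < N then a else b)"

lemma SS_path: "q \<in> (post A a ^^ N) (initial A) \<Longrightarrow>
   \<exists>\<pi>. \<pi> 0 \<in> initial A \<and> \<pi> N = q \<and> (\<forall>j<N. (\<pi> j, a, \<pi> (Suc j)) \<in> trans A)"
proof (induct N arbitrary: q)
  case 0 then show ?case by (auto intro!: exI[of _ "\<lambda>_. q"])
next
  case (Suc N)
  have "q \<in> post A a ((post A a ^^ N) (initial A))" using Suc.prems by simp
  then obtain p where p: "p \<in> (post A a ^^ N) (initial A)" "(p, a, q) \<in> trans A"
    unfolding post_def by blast
  then obtain \<pi> where \<pi>: "\<pi> 0 \<in> initial A" "\<pi> N = p" "\<forall>j<N. (\<pi> j, a, \<pi> (Suc j)) \<in> trans A"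
    using Suc.hyps by blast
  show ?case
    apply (rule exI[of _ "\<pi>(Suc N := q)"])
    using \<pi> p by (auto simp: less_Suc_eq)
qed

lemma infinite_shift:
  fixes P :: "nat \<Rightarrow> bool"
  shows "infinite {n. P n} \<longleftrightarrow> infinite {n. P (N + n)}"
proof -
  have "{n. P n} \<subseteq> {..<N} \<union> (\<lambda>n. N + n) ` {n. P (N + n)}"
  proof
    fix n assume "n \<in> {n. P n}"
    then show "n \<in> {..<N} \<union> (\<lambda>n. N + n) ` {n. P (N + n)}"
      by (cases "n < N") (auto intro!: image_eqI[of _ _ "n - N"])
  qed
  moreover have "(\<lambda>n. N + n) ` {n. P (N + n)} \<subseteq> {n. P n}" by auto
  moreover have "inj (\<lambda>n::nat. N + n)" by (auto simp: inj_def)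
  ultimately show ?thesis
    by (metis (no_types, lifting) finite_Un finite_imageD finite_imageI finite_lessThan finite_subset inj_on_subset subset_UNIV)
qed

lemma wd_lang: "wd a b N \<in> lang A \<longleftrightarrow> (\<exists>q\<in>(post A a ^^ N) (initial A). accb A b q)"
proof
  assume "wd a b N \<in> lang A"
  then obtain r where r0: "r 0 \<in> initial A" and rt: "\<And>n. (r n, wd a b N n, r (Suc n)) \<in> trans A"
    and rf: "infinite {n. r n \<in> final A}" by (auto simp: lang_def run_def accepting_def)
  have "j \<le> N \<longrightarrow> r j \<in> (post A a ^^ j) (initial A)" for j
  proof (induct j)
    case 0 then show ?case using r0 by simp
  next
    case (Suc j) then show ?case using rt[of j] by (auto simp: post_def wd_def)
  qed
  moreover have rb: "(r (N+n), b, r (Suc (N+n))) \<in> trans A" for n using rt[of "N+n"] by (simp add: wd_def)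
  moreover have "accb A b (r N)" unfolding accb_def
    apply (rule exI[of _ "\<lambda>n. r (N + n)"])
    using rb rf infinite_shift[of "\<lambda>n. r n \<in> final A" N] by (auto simp: wd_def)
  ultimately show "\<exists>q\<in>(post A a ^^ N) (initial A). accb A b q" by blast
next
  assume "\<exists>q\<in>(post A a ^^ N) (initial A). accb A b q"
  then obtain q \<rho> where q: "q \<in> (post A a ^^ N) (initial A)" and \<rho>: "\<rho> 0 = q"
    "\<And>n. (\<rho> n, b, \<rho> (Suc n)) \<in> trans A" "infinite {n. \<rho> n \<in> final A}"
    by (auto simp: accb_def)
  obtain \<pi> where \<pi>: "\<pi> 0 \<in> initial A" "\<pi> N = q" "\<forall>j<N. (\<pi> j, a, \<pi> (Suc j)) \<in> trans A"
    using SS_path[OF q] by blast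
  define r where "r n = (if n \<le> N then \<pi> n else \<rho> (n - N))" for n
  have "(r n, wd a b N n, r (Suc n)) \<in> trans A" for n
  proof (cases "n < N")
    case True then show ?thesis using \<pi> by (auto simp: r_def wd_def)
  next
    case False
    then have "(\<rho> (n - N), b, \<rho> (Suc (n - N))) \<in> trans A" using \<rho>(2) by blast
    then show ?thesis using False \<pi>(2) \<rho>(1) by (auto simp: r_def wd_def Suc_diff_le)
  qed
  moreover have "infinite {n. r n \<in> final A}"
  proof -
    have "{n. r (N + n) \<in> final A} = {n. \<rho> n \<in> final A}"
      using \<pi>(2) \<rho>(1) by (auto simp: r_def)
    then show ?thesis using \<rho>(3) infinite_shift[of "\<lambda>n. r n \<in> final A" N] by simp
  qed
  moreover have "r 0 \<in> initial A" using \<pi> by (simp add: r_def)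
  ultimately show "wd a b N \<in> lang A" by (auto simp: lang_def run_def accepting_def)
qed

lemma SS_period:
  assumes wf: "wf_buchi A" and K: "size_buchi A \<le> K"
  shows "\<exists>i p. 0 < p \<and> p \<le> 2 ^ K \<and> (\<forall>n c. i \<le> n \<longrightarrow>
           (post A a ^^ (n + c * p)) (initial A) = (post A a ^^ n) (initial A)) \<and> i \<le> 2 ^ K"
proof -
  let ?S = "\<lambda>j. (post A a ^^ j) (initial A)"
  have sub: "?S j \<subseteq> states A" for j
    using wf by (induct j) (auto simp: wf_buchi_def post_def)
  have fin: "finite (states A)" using wf by (simp add: wf_buchi_def)
  have "card (Pow (states A)) \<le> 2 ^ K"
    using fin K by (simp add: card_Pow size_buchi_def)
  then have "card (Pow (states A)) < card {0..(2::nat)^K}" by simp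
  moreover have "?S ` {0..(2::nat)^K} \<subseteq> Pow (states A)" using sub by auto
  ultimately have "\<not> inj_on ?S {0..(2::nat)^K}"
    using card_inj_on_le[of ?S "{0..(2::nat)^K}" "Pow (states A)"] fin by fastforce
  then obtain i j where ij: "i \<in> {0..(2::nat)^K}" "j \<in> {0..(2::nat)^K}" "i \<noteq> j" "?S i = ?S j"
    unfolding inj_on_def by blast
  define i' where "i' = min i j"
  define p where "p = max i j - min i j"
  have Sp: "?S (i' + p) = ?S i'" using ij by (auto simp: i'_def p_def min_def max_def)
  have Sadd: "?S (x + y) = (post A a ^^ x) (?S y)" for x y by (simp add: funpow_add)
  have "?S (n + c * p) = ?S n" if "i' \<le> n" for n c
  proof (induct c)
    case 0 then show ?case by simp
  next
    case (Suc c)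
    have eq: "n + Suc c * p = (n - i' + c * p) + (i' + p)" using that by simp
    have "?S (n + Suc c * p) = (post A a ^^ (n - i' + c * p)) (?S (i' + p))"
      unfolding eq by (rule Sadd)
    also have "\<dots> = (post A a ^^ (n - i' + c * p)) (?S i')" using Sp by simp
    also have "\<dots> = ?S (n - i' + c * p + i')" by (rule Sadd[symmetric])
    also have "n - i' + c * p + i' = n + c * p" using that by simp
    finally show ?case using Suc by simp
  qed
  moreover have "0 < p" "p \<le> 2 ^ K" "i' \<le> 2 ^ K" using ij by (auto simp: p_def i'_def)
  ultimately show ?thesis by blast
qed

lemma indist:
  assumes wf: "wf_buchi A" and K: "size_buchi A \<le> K" and m: "2 ^ K \<le> m" "2 ^ K \<le> m'"
  shows "wd a b (fact m) \<in> lang A \<longleftrightarrow> wd a b (fact m') \<in> lang A"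
proof -
  let ?S = "\<lambda>j. (post A a ^^ j) (initial A)"
  obtain i p where ip: "0 < p" "p \<le> 2 ^ K" "\<And>n c. i \<le> n \<Longrightarrow> ?S (n + c * p) = ?S n" "i \<le> 2 ^ K"
    using SS_period[OF wf K, of a] by blast
  have key: "?S (fact m) = ?S (fact m')" if "2 ^ K \<le> m" "m \<le> m'" for m m'
  proof -
    have "p dvd fact m" using ip that by (intro dvd_fact) auto
    moreover have "p dvd fact m'" using ip that by (intro dvd_fact) auto
    ultimately have "p dvd fact m' - fact m" by (simp add: dvd_diff_nat)
    then obtain c where c: "fact m' - fact m = p * c" by blast
    have le: "fact m \<le> (fact m' :: nat)" using that by (simp add: fact_mono)
    have e: "fact m' = fact m + c * p" using c le by (metis le_add_diff_inverse mult.commute)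
    have im: "i \<le> fact m" using ip(4) that fact_ge_self[of m] by linarith
    have "?S (fact m + c * p) = ?S (fact m)" by (rule ip(3)[OF im])
    then show ?thesis using e by simp
  qed
  have Seq: "?S (fact m) = ?S (fact m')"
  proof (cases "m \<le> m'")
    case True then show ?thesis by (rule key[OF m(1)])
  next
    case False then have mm: "m' \<le> m" by linarith
    show ?thesis using key[OF m(2) mm] by (rule sym)
  qed
  show ?thesis unfolding wd_lang Seq ..
qed

lemma noncomplete:
  assumes "CARD('a::finite) \<ge> 2"
  shows "\<not> Metric_space.mcomplete (UNIV :: (nat \<Rightarrow> 'a) set) buchi_dist"
proof -
  interpret M: Metric_space "UNIV :: (nat \<Rightarrow> 'a) set" buchi_dist by (rule metric)
  obtain a b :: 'a where ab: "a \<noteq> b"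
  proof -
    have "\<exists>a b :: 'a. a \<noteq> b"
    proof (rule ccontr)
      assume "\<not> (\<exists>a b :: 'a. a \<noteq> b)"
      then have "(UNIV :: 'a set) = {undefined}" by auto
      then have "CARD('a) = 1" by (metis card.empty card_insert_disjoint empty_iff finite.emptyI One_nat_def)
      then show False using assms by simp
    qed
    then show ?thesis using that by blast
  qed
  define xs where "xs n = wd a b (fact n)" for n
  have cauchy: "M.MCauchy xs"
    unfolding M.MCauchy_def
  proof (intro conjI allI impI)
    fix \<epsilon> :: real assume e: "\<epsilon> > 0"
    obtain K where K: "(2::real) powr - real K < \<epsilon>" using pow2_small[OF e] by blast
    show "\<exists>N. \<forall>n n'. N \<le> n \<longrightarrow> N \<le> n' \<longrightarrow> buchi_dist (xs n) (xs n') < \<epsilon>"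
    proof (intro exI allI impI)
      fix n n' :: nat assume n: "2 ^ K \<le> n" "2 ^ K \<le> n'"
      have "\<not> separates A (xs n) (xs n')" if "wf_buchi A" "size_buchi A \<le> K" for A
        using indist[OF that n, of a b] by (simp add: separates_def xs_def)
      then have "buchi_dist (xs n) (xs n') \<le> 2 powr - real (Suc K)" by (rule dist_small)
      moreover have "(2::real) powr - real (Suc K) \<le> 2 powr - real K" by simp
      ultimately show "buchi_dist (xs n) (xs n') < \<epsilon>" using K by linarith
    qed
  qed simp
  have xsk: "xs n k = a" if "k < n" for n k
  proof -
    have "k < fact n" using that fact_ge_self[of n] by linarith
    then show ?thesis by (simp add: xs_def wd_def)
  qed
  have nolim: "\<not> limitin M.mtopology xs l sequentially" for l
  proof
    assume "limitin M.mtopology xs l sequentially"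
    then have ev: "\<And>\<epsilon>. \<epsilon> > 0 \<Longrightarrow> \<exists>N. \<forall>n\<ge>N. buchi_dist (xs n) l < \<epsilon>"
      unfolding M.limitin_metric eventually_sequentially by auto
    show False
    proof (cases "l = (\<lambda>_. a)")
      case True
      obtain N where N: "\<forall>n\<ge>N. buchi_dist (xs n) l < 2 powr - real (size_buchi (aom a))"
        using ev[of "2 powr - real (size_buchi (aom a))"] by auto
      have "xs N (fact N) = b" by (simp add: xs_def wd_def)
      then have "xs N \<noteq> (\<lambda>_. a)" using ab by (metis)
      then have "separates (aom a) (xs N) l" using True by (simp add: separates_def aom_lang)
      then have "buchi_dist (xs N) l \<ge> 2 powr - real (size_buchi (aom a))" by (rule dist_ge[OF aom_wf])
      then show False using N by auto
    next
      case False
      then obtain k where k: "l k \<noteq> a" by auto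
      obtain N where N: "\<forall>n\<ge>N. buchi_dist (xs n) l < 2 powr - real (size_buchi (cyl k (l k)))"
        using ev[of "2 powr - real (size_buchi (cyl k (l k)))"] by auto
      define n where "n = max N (Suc k)"
      have "xs n k = a" using xsk[of k n] by (simp add: n_def)
      then have "separates (cyl k (l k)) (xs n) l" using k by (simp add: separates_def cyl_lang)
      then have "buchi_dist (xs n) l \<ge> 2 powr - real (size_buchi (cyl k (l k)))" by (rule dist_ge[OF cyl_wf])
      moreover have "N \<le> n" by (simp add: n_def)
      ultimately show False using N by fastforce
    qed
  qed
  show ?thesis unfolding M.mcomplete_def using cauchy nolim by blast
qed

theorem proposition3p2:
  assumes "CARD('a::finite) \<ge> 2"
  shows "Metric_space (UNIV :: (nat \<Rightarrow> 'a) set) buchi_dist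
       \<and> Metric_space.mtopology (UNIV :: (nat \<Rightarrow> 'a) set) buchi_dist = buchi_topology
       \<and> \<not> Metric_space.mcomplete (UNIV :: (nat \<Rightarrow> 'a) set) (buchi_dist :: (nat \<Rightarrow> 'a) \<Rightarrow> _)"
  using metric mtop_eq noncomplete[OF assms] by blast

end
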